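(* Let $q$ be a prime and let $C\subseteq GF(q)^n$ be an affine subspace (affine code) such that $C\subseteq\mathcal{A}_{i_1}\cup\dots\cup\mathcal{A}_{i_k}$ for some weights $i_1,\dots,i_k$. Then $|C|\le q^n/L(n,q,i_1,\dots,i_k)$.
   Context: The weight ${\rm wt}(x)$ of $x\in GF(q)^n$ is the number of nonzero coordinates, and $\mathcal{A}_i=\{x\in GF(q)^n:{\rm wt}(x)=i\}$. For $f:GF(q)^n\to\mathbb{C}$ the Fourier transform is $\widehat{f}(z)=q^{-n/2}\sum_{x}f(x)\,\omega^{(x,z)}$ with $\omega=e^{2\pi i/q}$ and $(x,z)=\sum_i x_iz_i$ (computed in $\mathbb{Z}_q$). The support of a function is the set of arguments where it is nonzero. $L(n,q,i_1,\dots,i_k)$ is the minimum of $|{\rm supp}(f)|$ over all functions $f:GF(q)^n\to\mathbb{C}$, not identically zero, with ${\rm supp}(\widehat{f})\subseteq\mathcal{A}_{i_1}\cup\dots\cup\mathcal{A}_{i_k}$. *)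

theory Defs
  imports Complex_Main "HOL-Computational_Algebra.Primes"
begin

text \<open>GF(q)^n for prime q: vectors x :: nat => int with entries in {0..q-1}
  at coordinates i < n and 0 elsewhere (canonical representatives).\<close>
definition gfspace :: "nat \<Rightarrow> nat \<Rightarrow> (nat \<Rightarrow> int) set" where
  "gfspace n q = {x. (\<forall>i<n. 0 \<le> x i \<and> x i < int q) \<and> (\<forall>i\<ge>n. x i = 0)}"

definition wt :: "nat \<Rightarrow> (nat \<Rightarrow> int) \<Rightarrow> nat" where
  "wt n x = card {i. i < n \<and> x i \<noteq> 0}"

definition ip :: "nat \<Rightarrow> nat \<Rightarrow> (nat \<Rightarrow> int) \<Rightarrow> (nat \<Rightarrow> int) \<Rightarrow> int" where
  "ip n q x z = (\<Sum>i<n. x i * z i) mod int q"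

definition omega_pow :: "nat \<Rightarrow> int \<Rightarrow> complex" where
  "omega_pow q k = exp (2 * pi * \<i> * of_int k / of_nat q)"

definition fourier :: "nat \<Rightarrow> nat \<Rightarrow> ((nat \<Rightarrow> int) \<Rightarrow> complex) \<Rightarrow> (nat \<Rightarrow> int) \<Rightarrow> complex" where
  "fourier n q f z = complex_of_real (real q powr (- real n / 2)) *
     (\<Sum>x\<in>gfspace n q. f x * omega_pow q (ip n q x z))"

definition fsupp :: "nat \<Rightarrow> nat \<Rightarrow> ((nat \<Rightarrow> int) \<Rightarrow> complex) \<Rightarrow> (nat \<Rightarrow> int) set" where
  "fsupp n q f = {x \<in> gfspace n q. f x \<noteq> 0}"

definition weight_union :: "nat \<Rightarrow> nat \<Rightarrow> nat set \<Rightarrow> (nat \<Rightarrow> int) set" where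
  "weight_union n q I = {x \<in> gfspace n q. wt n x \<in> I}"

definition Lmin :: "nat \<Rightarrow> nat \<Rightarrow> nat set \<Rightarrow> nat" where
  "Lmin n q I = Inf {card (fsupp n q f) | f.
      fsupp n q f \<noteq> {} \<and> fsupp n q (fourier n q f) \<subseteq> weight_union n q I}"

definition gf_subspace :: "nat \<Rightarrow> nat \<Rightarrow> (nat \<Rightarrow> int) set \<Rightarrow> bool" where
  "gf_subspace n q V \<longleftrightarrow> V \<subseteq> gfspace n q \<and> (\<lambda>i. 0) \<in> V \<and>
     (\<forall>x\<in>V. \<forall>y\<in>V. (\<lambda>i. (x i + y i) mod int q) \<in> V) \<and>
     (\<forall>a\<in>{0..<int q}. \<forall>x\<in>V. (\<lambda>i. (a * x i) mod int q) \<in> V)"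

definition affine_code :: "nat \<Rightarrow> nat \<Rightarrow> (nat \<Rightarrow> int) set \<Rightarrow> bool" where
  "affine_code n q C \<longleftrightarrow> (\<exists>c\<in>gfspace n q. \<exists>V. gf_subspace n q V \<and>
     C = (\<lambda>v. (\<lambda>i. (c i + v i) mod int q)) ` V)"

end

theory Submission imports Defs "HOL-Library.FuncSet" "HOL-Analysis.Analysis" begin

lemma omega_def2: "omega_pow q a = exp (\<i> * complex_of_real (2 * pi * a / q))"
  unfolding omega_pow_def by (simp add: field_simps)

lemma omA: "omega_pow q a = 1 \<longleftrightarrow> (\<exists>n::int. 2 * pi * a / q = of_int (2*n) * pi)"
    unfolding omega_def2 exp_eq_1 by simp
lemma omB: "(\<exists>n::int. real_of_int a = of_int n * q) \<longleftrightarrow> (\<exists>n::int. a = n * int q)"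
    by (metis of_int_eq_iff of_int_mult of_int_of_nat_eq)
lemma omC: "(\<exists>n::int. a = n * int q) \<longleftrightarrow> a mod int q = 0" by (auto simp: dvd_def mult.commute)
lemma omD: "(q::nat) > 0 \<Longrightarrow> 2 * pi * a / q = of_int (2*n) * pi \<longleftrightarrow> real_of_int a = of_int n * q"
  using pi_gt_zero by (simp add: field_simps)

lemma omega_one_iff:
  assumes "q > 0"
  shows "omega_pow q a = 1 \<longleftrightarrow> a mod int q = 0"
proof -
  have "omega_pow q a = 1 \<longleftrightarrow> (\<exists>n::int. real_of_int a = of_int n * q)"
    unfolding omA using omD[OF assms, of a] by simp
  then show ?thesis using omB[of a q] omC[of a q] by simp
qed

lemma omega_add: "omega_pow q (a + b) = omega_pow q a * omega_pow q b"
proof -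
  have "2 * pi * \<i> * of_int (a + b) / of_nat q = 2 * pi * \<i> * of_int a / of_nat q + 2 * pi * \<i> * of_int b / of_nat q"
    by (simp add: distrib_left add_divide_distrib)
  then show ?thesis unfolding omega_pow_def by (simp only: exp_add)
qed

lemma omega_zero[simp]: "omega_pow q 0 = 1"
  unfolding omega_pow_def by simp

lemma omega_mod:
  assumes "q > 0" "a mod int q = b mod int q"
  shows "omega_pow q a = omega_pow q b"
proof -
  have "omega_pow q a = omega_pow q (b + (a - b))" by simp
  also have "\<dots> = omega_pow q b * omega_pow q (a - b)" by (rule omega_add)
  also have "omega_pow q (a - b) = 1" using assms
    by (subst omega_one_iff) (auto simp: mod_eq_dvd_iff dvd_eq_mod_eq_0[symmetric])
  finally show ?thesis by simp
qed

definition addq :: "nat \<Rightarrow> (nat \<Rightarrow> int) \<Rightarrow> (nat \<Rightarrow> int) \<Rightarrow> (nat \<Rightarrow> int)" where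
  "addq q x y = (\<lambda>i. (x i + y i) mod int q)"

definition dot :: "nat \<Rightarrow> (nat \<Rightarrow> int) \<Rightarrow> (nat \<Rightarrow> int) \<Rightarrow> int" where
  "dot n x z = (\<Sum>i<n. x i * z i)"

lemma dot_comm: "dot n x z = dot n z x"
  unfolding dot_def by (simp add: mult.commute)

lemma dot_addq_mod: "dot n (addq q a b) z mod int q = (dot n a z + dot n b z) mod int q"
proof -
  have "dot n (addq q a b) z mod int q = (\<Sum>i<n. ((a i + b i) mod int q) * z i) mod int q"
    unfolding dot_def addq_def by simp
  also have "\<dots> = (\<Sum>i<n. ((a i + b i) mod int q * z i) mod int q) mod int q"
    by (rule mod_sum_eq[symmetric])
  also have "\<dots> = (\<Sum>i<n. ((a i + b i) * z i) mod int q) mod int q"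
    by (simp add: mod_mult_left_eq)
  also have "\<dots> = (\<Sum>i<n. (a i + b i) * z i) mod int q"
    by (rule mod_sum_eq)
  also have "\<dots> = (dot n a z + dot n b z) mod int q"
    unfolding dot_def by (simp add: sum.distrib distrib_right)
  finally show ?thesis .
qed

lemma gf_image:
  "gfspace n q = (\<lambda>f i. if i < n then f i else 0) ` (PiE {..<n} (\<lambda>_. {0..<int q}))"
proof
  show "gfspace n q \<subseteq> (\<lambda>f i. if i < n then f i else 0) ` (PiE {..<n} (\<lambda>_. {0..<int q}))"
  proof
    fix x assume x: "x \<in> gfspace n q"
    have "x = (\<lambda>i. if i < n then restrict x {..<n} i else 0)"
      using x unfolding gfspace_def by (auto simp: fun_eq_iff)
    moreover have "restrict x {..<n} \<in> PiE {..<n} (\<lambda>_. {0..<int q})"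
      using x unfolding gfspace_def by auto
    ultimately show "x \<in> (\<lambda>f i. if i < n then f i else 0) ` (PiE {..<n} (\<lambda>_. {0..<int q}))"
      by blast
  qed
next
  show "(\<lambda>f i. if i < n then f i else 0) ` (PiE {..<n} (\<lambda>_. {0..<int q})) \<subseteq> gfspace n q"
    unfolding gfspace_def by (auto simp: PiE_def Pi_def)
qed

lemma gf_inj: "inj_on (\<lambda>f i. if i < n then f i else 0) (PiE {..<n} (\<lambda>_. {0..<int q}))"
proof (rule inj_onI)
  fix f g assume f: "f \<in> PiE {..<n} (\<lambda>_. {0..<int q})" and g: "g \<in> PiE {..<n} (\<lambda>_. {0..<int q})"
    and e: "(\<lambda>i. if i < n then f i else 0) = (\<lambda>i. if i < n then g i else 0)"
  show "f = g"
  proof (rule PiE_ext[OF f g])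
    fix i assume "i \<in> {..<n}" then show "f i = g i" using fun_cong[OF e, of i] by simp
  qed
qed

lemma gf_finite: "finite (gfspace n q)"
  unfolding gf_image by (intro finite_imageI finite_PiE) auto

lemma gf_card: "card (gfspace n q) = q ^ n"
  unfolding gf_image by (simp add: card_image[OF gf_inj] card_PiE)

lemma addq_gf: "q > 0 \<Longrightarrow> x \<in> gfspace n q \<Longrightarrow> y \<in> gfspace n q \<Longrightarrow> addq q x y \<in> gfspace n q"
  unfolding gfspace_def addq_def by auto

lemma addq_inj:
  assumes "x \<in> gfspace n q" "y \<in> gfspace n q" "y' \<in> gfspace n q" "addq q x y = addq q x y'"
  shows "y = y'"
proof
  fix i
  show "y i = y' i"
  proof (cases "i < n")
    case True
    have "(x i + y i) mod int q = (x i + y' i) mod int q" using fun_cong[OF assms(4), of i]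
      unfolding addq_def by simp
    then have "y i mod int q = y' i mod int q"
      by (simp add: mod_eq_dvd_iff)
    moreover have "y i mod int q = y i" "y' i mod int q = y' i"
      using assms(2,3) True unfolding gfspace_def by auto
    ultimately show ?thesis by simp
  next
    case False
    then show ?thesis using assms(2,3) unfolding gfspace_def by auto
  qed
qed

lemma char_sum_zero:
  fixes W :: "(nat \<Rightarrow> int) set" and \<phi> :: "(nat \<Rightarrow> int) \<Rightarrow> int"
  assumes q: "q > 0" and WG: "W \<subseteq> gfspace n q"
    and cl: "\<And>a b. a \<in> W \<Longrightarrow> b \<in> W \<Longrightarrow> addq q a b \<in> W"
    and w0: "w0 \<in> W"
    and add: "\<And>b. b \<in> W \<Longrightarrow> omega_pow q (\<phi> (addq q w0 b)) = omega_pow q (\<phi> w0) * omega_pow q (\<phi> b)"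
    and ne: "omega_pow q (\<phi> w0) \<noteq> 1"
  shows "(\<Sum>w\<in>W. omega_pow q (\<phi> w)) = 0"
proof -
  have fin: "finite W" using finite_subset[OF WG gf_finite] .
  have inj: "inj_on (addq q w0) W"
    using addq_inj[of w0 n q] w0 WG by (auto intro!: inj_onI)
  have img: "addq q w0 ` W = W"
    using endo_inj_surj[OF fin _ inj] cl w0 by auto
  define S where "S = (\<Sum>w\<in>W. omega_pow q (\<phi> w))"
  have "S = (\<Sum>w\<in>addq q w0 ` W. omega_pow q (\<phi> w))" unfolding S_def img ..
  also have "\<dots> = (\<Sum>b\<in>W. omega_pow q (\<phi> (addq q w0 b)))"
    by (rule sum.reindex[OF inj, unfolded comp_def])
  also have "\<dots> = (\<Sum>b\<in>W. omega_pow q (\<phi> w0) * omega_pow q (\<phi> b))"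
    using add by (rule sum.cong[OF refl])
  also have "\<dots> = omega_pow q (\<phi> w0) * S"
    unfolding S_def by (simp add: sum_distrib_left)
  finally have "(1 - omega_pow q (\<phi> w0)) * S = 0" by (simp add: algebra_simps)
  with ne have "S = 0" by simp
  then show ?thesis unfolding S_def .
qed

lemma dot_add_omega:
  assumes "q > 0"
  shows "omega_pow q (dot n (addq q a b) z) = omega_pow q (dot n a z) * omega_pow q (dot n b z)"
  by (subst omega_add[symmetric]) (rule omega_mod[OF assms dot_addq_mod])

lemma dot_add_omega_neg:
  assumes "q > 0"
  shows "omega_pow q (- dot n (addq q a b) z) = omega_pow q (- dot n a z) * omega_pow q (- dot n b z)"
proof -
  have "(- dot n (addq q a b) z) mod int q = (- dot n a z + - dot n b z) mod int q"
    using mod_minus_cong[OF dot_addq_mod[of n q a b z]] by simp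
  then show ?thesis
    by (subst omega_add[symmetric]) (rule omega_mod[OF assms])
qed

lemma neg_mod0: "(- a) mod (m::int) = 0 \<longleftrightarrow> a mod m = 0"
  by (metis dvd_minus_iff dvd_imp_mod_0 mod_0_imp_dvd)

definition unitv :: "nat \<Rightarrow> nat \<Rightarrow> int" where "unitv i = (\<lambda>j. if j = i then 1 else 0)"

lemma unitv_gf: "i < n \<Longrightarrow> q > 1 \<Longrightarrow> unitv i \<in> gfspace n q"
  unfolding unitv_def gfspace_def by auto

lemma dot_unitv: "i < n \<Longrightarrow> dot n (unitv i) z = z i"
proof -
  assume i: "i < n"
  have "dot n (unitv i) z = (\<Sum>j<n. if j = i then z j else 0)"
    unfolding dot_def unitv_def by (rule sum.cong) auto
  also have "\<dots> = z i" using i by (simp add: sum.delta)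
  finally show ?thesis .
qed

lemma gf_mod_ne:
  assumes "y \<in> gfspace n q" "z \<in> gfspace n q" "i < n" "y i \<noteq> z i"
  shows "(z i - y i) mod int q \<noteq> 0"
proof
  assume "(z i - y i) mod int q = 0"
  then have "z i mod int q = y i mod int q" by (simp add: mod_eq_dvd_iff dvd_eq_mod_eq_0)
  moreover have "y i mod int q = y i" "z i mod int q = z i"
    using assms unfolding gfspace_def by auto
  ultimately show False using assms(4) by simp
qed

lemma gf_nonzero:
  assumes "v \<in> gfspace n q" "v \<noteq> (\<lambda>i. 0)"
  obtains i where "i < n" "v i \<noteq> 0"
proof -
  have "\<exists>i. v i \<noteq> 0" using assms(2) by (auto simp: fun_eq_iff)
  then obtain i where i: "v i \<noteq> 0" by blast
  have "i < n"
  proof (rule ccontr)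
    assume "\<not> i < n" then show False using i assms(1) unfolding gfspace_def by auto
  qed
  with i that show ?thesis by blast
qed


theorem corollary4:
  fixes n q :: nat and I :: "nat set" and C :: "(nat \<Rightarrow> int) set"
  assumes "prime q"
    and "finite I"
    and "affine_code n q C"
    and "C \<subseteq> weight_union n q I"
  shows "real (card C) \<le> real q ^ n / real (Lmin n q I)"
proof -
  define G where "G = gfspace n q"
  have q1: "q > 1" using assms(1) by (rule prime_gt_1_nat)
  then have q0: "q > 0" by simp
  obtain c V where c: "c \<in> G" and sub: "gf_subspace n q V" and Cdef0: "C = (\<lambda>v. (\<lambda>i. (c i + v i) mod int q)) ` V"
  proof -
    from assms(3)[unfolded affine_code_def] obtain c where c: "c \<in> gfspace n q"
      and "\<exists>V. gf_subspace n q V \<and> C = (\<lambda>v. (\<lambda>i. (c i + v i) mod int q)) ` V" by (rule bexE)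
    then obtain V where "gf_subspace n q V" "C = (\<lambda>v. (\<lambda>i. (c i + v i) mod int q)) ` V" by (elim exE conjE)
    with c that show ?thesis unfolding G_def by blast
  qed
  have Cdef: "C = addq q c ` V" unfolding Cdef0 addq_def ..
  have sub': "V \<subseteq> gfspace n q \<and> (\<lambda>i. 0) \<in> V \<and> (\<forall>x\<in>V. \<forall>y\<in>V. (\<lambda>i. (x i + y i) mod int q) \<in> V)"
    using sub unfolding gf_subspace_def by blast
  have VG: "V \<subseteq> G" using sub' unfolding G_def by blast
  have V0: "(\<lambda>i. 0) \<in> V" using sub' by blast
  have Vcl: "\<And>a b. a \<in> V \<Longrightarrow> b \<in> V \<Longrightarrow> addq q a b \<in> V"
    using sub' unfolding addq_def by blast
  have finG: "finite G" unfolding G_def by (rule gf_finite)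
  have finV: "finite V" using finite_subset[OF VG finG] .
  have injC: "inj_on (addq q c) V"
  proof (rule inj_onI)
    fix a b assume "a \<in> V" "b \<in> V" "addq q c a = addq q c b"
    then show "a = b" using addq_inj[of c n q a b] c VG unfolding G_def by blast
  qed
  have cardC: "card C = card V" unfolding Cdef by (rule card_image[OF injC])
  have CG: "C \<subseteq> G"
  proof
    fix y assume "y \<in> C"
    then obtain v where "v \<in> V" "y = addq q c v" unfolding Cdef by blast
    then show "y \<in> G" using addq_gf[OF q0, of c n v] c VG unfolding G_def by blast
  qed
  have finC: "finite C" using finite_subset[OF CG finG] .
  have Cne: "C \<noteq> {}" using V0 Cdef by auto
  define f where "f x = (\<Sum>y\<in>C. omega_pow q (- dot n y x))" for x
  define P where "P = {x\<in>G. \<forall>v\<in>V. dot n v x mod int q = 0}"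
  have finP: "finite P" unfolding P_def using finG by simp
  have zG: "(\<lambda>i. 0) \<in> G" unfolding G_def gfspace_def using q0 by simp
  have f0: "f (\<lambda>i. 0) = of_nat (card C)" unfolding f_def dot_def by simp
  have suppne: "fsupp n q f \<noteq> {}"
  proof -
    have "card C \<noteq> 0" using Cne finC by simp
    then have "(\<lambda>i. 0) \<in> fsupp n q f" unfolding fsupp_def using zG f0 unfolding G_def by simp
    then show ?thesis by blast
  qed
  have suppP: "fsupp n q f \<subseteq> P"
  proof
    fix x assume x: "x \<in> fsupp n q f"
    then have xG: "x \<in> G" and fx: "f x \<noteq> 0" unfolding fsupp_def G_def by auto
    show "x \<in> P"
    proof (rule ccontr)
      assume "x \<notin> P"
      then obtain v0 where v0: "v0 \<in> V" "dot n v0 x mod int q \<noteq> 0" using xG unfolding P_def by auto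
      have "f x = (\<Sum>v\<in>V. omega_pow q (- dot n (addq q c v) x))"
        unfolding f_def Cdef by (rule sum.reindex[OF injC, unfolded comp_def])
      also have "\<dots> = (\<Sum>v\<in>V. omega_pow q (- dot n c x) * omega_pow q (- dot n v x))"
        by (simp add: dot_add_omega_neg[OF q0])
      also have "\<dots> = omega_pow q (- dot n c x) * (\<Sum>v\<in>V. omega_pow q (- dot n v x))"
        by (simp add: sum_distrib_left)
      also have "(\<Sum>v\<in>V. omega_pow q (- dot n v x)) = 0"
      proof (rule char_sum_zero[OF q0 VG[unfolded G_def] Vcl v0(1)])
        show "omega_pow q (- dot n (addq q v0 b) x) = omega_pow q (- dot n v0 x) * omega_pow q (- dot n b x)" for b
          by (rule dot_add_omega_neg[OF q0])
        show "omega_pow q (- dot n v0 x) \<noteq> 1"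
          using v0(2) by (simp add: omega_one_iff[OF q0] neg_mod0)
      qed
      finally show False using fx by simp
    qed
  qed
  have count: "card P * card V = q ^ n"
  proof -
    define S where "S = (\<Sum>x\<in>G. \<Sum>v\<in>V. omega_pow q (dot n v x))"
    have "S = (\<Sum>x\<in>G. if x \<in> P then of_nat (card V) else 0)"
      unfolding S_def
    proof (rule sum.cong[OF refl])
      fix x assume xG: "x \<in> G"
      show "(\<Sum>v\<in>V. omega_pow q (dot n v x)) = (if x \<in> P then of_nat (card V) else 0)"
      proof (cases "x \<in> P")
        case True
        then have "\<And>v. v \<in> V \<Longrightarrow> omega_pow q (dot n v x) = 1"
          unfolding P_def by (simp add: omega_one_iff[OF q0])
        then show ?thesis using True by simp
      next
        case False
        then obtain v0 where v0: "v0 \<in> V" "dot n v0 x mod int q \<noteq> 0" using xG unfolding P_def by auto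
        have "(\<Sum>v\<in>V. omega_pow q (dot n v x)) = 0"
        proof (rule char_sum_zero[OF q0 VG[unfolded G_def] Vcl v0(1)])
          show "omega_pow q (dot n (addq q v0 b) x) = omega_pow q (dot n v0 x) * omega_pow q (dot n b x)" for b
            by (rule dot_add_omega[OF q0])
          show "omega_pow q (dot n v0 x) \<noteq> 1"
            using v0(2) by (simp add: omega_one_iff[OF q0])
        qed
        then show ?thesis using False by simp
      qed
    qed
    also have "\<dots> = of_nat (card P * card V)"
    proof -
      have "G \<inter> P = P" unfolding P_def by auto
      then show ?thesis using finG by (simp add: sum.If_cases)
    qed
    finally have S1: "S = of_nat (card P * card V)" .
    have "S = (\<Sum>v\<in>V. \<Sum>x\<in>G. omega_pow q (dot n v x))"
      unfolding S_def by (rule sum.swap)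
    also have "\<dots> = (\<Sum>v\<in>V. if v = (\<lambda>i. 0) then of_nat (q ^ n) else 0)"
    proof (rule sum.cong[OF refl])
      fix v assume vV: "v \<in> V"
      show "(\<Sum>x\<in>G. omega_pow q (dot n v x)) = (if v = (\<lambda>i. 0) then of_nat (q ^ n) else 0)"
      proof (cases "v = (\<lambda>i. 0)")
        case True
        then show ?thesis using gf_card[of n q] unfolding G_def dot_def by simp
      next
        case False
        obtain i where i: "i < n" "v i \<noteq> 0" using gf_nonzero[OF _ False] vV VG unfolding G_def by blast
        have vi: "0 \<le> v i" "v i < int q" using vV VG i unfolding G_def gfspace_def by auto
        have "(\<Sum>x\<in>G. omega_pow q (dot n v x)) = 0"
          unfolding G_def
        proof (rule char_sum_zero[OF q0 subset_refl _ unitv_gf[OF i(1) q1]])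
          show "addq q a b \<in> gfspace n q" if "a \<in> gfspace n q" "b \<in> gfspace n q" for a b
            using addq_gf[OF q0 that] .
          show "omega_pow q (dot n v (addq q (unitv i) b)) = omega_pow q (dot n v (unitv i)) * omega_pow q (dot n v b)" for b
            unfolding dot_comm[of n v] by (rule dot_add_omega[OF q0])
          show "omega_pow q (dot n v (unitv i)) \<noteq> 1"
            unfolding dot_comm[of n v] dot_unitv[OF i(1)] omega_one_iff[OF q0]
            using i vi by simp
        qed
        then show ?thesis using False by simp
      qed
    qed
    also have "\<dots> = of_nat (q ^ n)"
      by (subst sum.delta[OF finV]) (simp add: V0)
    finally have "of_nat (card P * card V) = (of_nat (q ^ n) :: complex)" using S1 by simp
    then show ?thesis by (simp only: of_nat_eq_iff)
  qed
  have fourier_supp: "fsupp n q (fourier n q f) \<subseteq> C"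
  proof
    fix z assume z: "z \<in> fsupp n q (fourier n q f)"
    then have zG: "z \<in> G" and fz: "fourier n q f z \<noteq> 0" unfolding fsupp_def G_def by auto
    show "z \<in> C"
    proof (rule ccontr)
      assume zC: "z \<notin> C"
      have "(\<Sum>x\<in>G. f x * omega_pow q (ip n q x z)) = (\<Sum>x\<in>G. \<Sum>y\<in>C. omega_pow q (dot n x (\<lambda>j. z j - y j)))"
      proof (rule sum.cong[OF refl])
        fix x
        have e: "omega_pow q (ip n q x z) = omega_pow q (dot n x z)"
          unfolding ip_def dot_def by (rule omega_mod[OF q0]) simp
        have h: "omega_pow q (- dot n y x) * omega_pow q (dot n x z) = omega_pow q (dot n x (\<lambda>j. z j - y j))" for y
        proof -
          have "\<And>j. x j * (z j - y j) = - (y j * x j) + x j * z j" by (simp add: algebra_simps)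
          then have "dot n x (\<lambda>j. z j - y j) = (\<Sum>j<n. - (y j * x j) + x j * z j)"
            unfolding dot_def by (intro sum.cong) auto
          also have "\<dots> = - dot n y x + dot n x z"
            unfolding dot_def by (simp add: sum_subtractf)
          finally have "dot n x (\<lambda>j. z j - y j) = - dot n y x + dot n x z" .
          then show ?thesis by (simp only: omega_add)
        qed
        have "f x * omega_pow q (ip n q x z) = (\<Sum>y\<in>C. omega_pow q (- dot n y x) * omega_pow q (dot n x z))"
          unfolding f_def e by (rule sum_distrib_right)
        also have "\<dots> = (\<Sum>y\<in>C. omega_pow q (dot n x (\<lambda>j. z j - y j)))"
          by (rule sum.cong[OF refl h])
        finally show "f x * omega_pow q (ip n q x z) = (\<Sum>y\<in>C. omega_pow q (dot n x (\<lambda>j. z j - y j)))" .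
      qed
      also have "\<dots> = (\<Sum>y\<in>C. \<Sum>x\<in>G. omega_pow q (dot n x (\<lambda>j. z j - y j)))"
        by (rule sum.swap)
      also have "\<dots> = 0"
      proof (rule sum.neutral, rule ballI)
        fix y assume yC: "y \<in> C"
        have yG: "y \<in> G" using yC CG by auto
        have "y \<noteq> z" using yC zC by auto
        then obtain i where i: "y i \<noteq> z i" by auto
        have iN: "i < n"
        proof (rule ccontr)
          assume "\<not> i < n" then show False using yG zG i unfolding G_def gfspace_def by auto
        qed
        show "(\<Sum>x\<in>G. omega_pow q (dot n x (\<lambda>j. z j - y j))) = 0"
          unfolding G_def
        proof (rule char_sum_zero[OF q0 subset_refl _ unitv_gf[OF iN q1]])
          show "addq q a b \<in> gfspace n q" if "a \<in> gfspace n q" "b \<in> gfspace n q" for a b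
            using addq_gf[OF q0 that] .
          show "omega_pow q (dot n (addq q (unitv i) b) (\<lambda>j. z j - y j)) = omega_pow q (dot n (unitv i) (\<lambda>j. z j - y j)) * omega_pow q (dot n b (\<lambda>j. z j - y j))" for b
            by (rule dot_add_omega[OF q0])
          show "omega_pow q (dot n (unitv i) (\<lambda>j. z j - y j)) \<noteq> 1"
            using gf_mod_ne[of y n q z i] yG zG iN i unfolding G_def
            by (simp add: dot_unitv omega_one_iff[OF q0])
        qed
      qed
      finally have "fourier n q f z = 0" unfolding fourier_def G_def by simp
      with fz show False by simp
    qed
  qed
  define Lset where "Lset = {card (fsupp n q g) | g.
      fsupp n q g \<noteq> {} \<and> fsupp n q (fourier n q g) \<subseteq> weight_union n q I}"
  have Lmin_eq: "Lmin n q I = Inf Lset" unfolding Lmin_def Lset_def ..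
  have fin_in: "card (fsupp n q f) \<in> Lset"
    unfolding Lset_def using suppne fourier_supp assms(4) by blast
  have Lle: "Lmin n q I \<le> card (fsupp n q f)"
    unfolding Lmin_eq by (rule cInf_lower[OF fin_in]) (rule bdd_belowI[of _ 0], simp)
  have Lpos: "Lmin n q I > 0"
  proof -
    have "Lset \<noteq> {}" using fin_in by blast
    then have "Inf Lset \<in> Lset" by (rule Inf_nat_def1)
    then obtain g where "Inf Lset = card (fsupp n q g)" "fsupp n q g \<noteq> {}" unfolding Lset_def by blast
    moreover have "finite (fsupp n q g)"
      using finite_subset[OF _ finG] unfolding fsupp_def G_def by auto
    ultimately show ?thesis unfolding Lmin_eq by (simp add: card_gt_0_iff)
  qed
  have "card (fsupp n q f) \<le> card P" by (rule card_mono[OF finP suppP])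
  then have "card C * Lmin n q I \<le> card V * card P" using Lle cardC
    by (metis le_trans mult_le_mono2)
  then have "card C * Lmin n q I \<le> q ^ n" using count by (simp add: mult.commute)
  then have "real (card C) * real (Lmin n q I) \<le> real q ^ n"
    by (metis of_nat_le_iff of_nat_mult of_nat_power)
  then show ?thesis using Lpos by (simp add: pos_le_divide_eq)
qed

end
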